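(* Let the data be generated by the linear-Gaussian model in the context, with $c_1\neq0$, $c_2\neq0$ and $\sigma_t>0$. Then, writing $\mathrm{Var},\mathrm{Cov}$ for (co)variances under the observed joint distribution of $(x_1,x_2,t,y)$, one has $\mathrm{Var}(t)\mathrm{Cov}(x_1,x_2)-\mathrm{Cov}(x_1,t)\mathrm{Cov}(x_2,t)\neq 0$, $$c_{yt}=\frac{\mathrm{Cov}(t,y)\,\mathrm{Cov}(x_1,x_2)-\mathrm{Cov}(x_2,y)\,\mathrm{Cov}(x_1,t)}{\mathrm{Var}(t)\,\mathrm{Cov}(x_1,x_2)-\mathrm{Cov}(x_1,t)\,\mathrm{Cov}(x_2,t)},$$ and for every $t\in\mathbb R$ the interventional distribution is $p(y\mid do(t))=\mathcal N\big(c_{yt}\,t,\ \sigma_y^2+c_{yz}^2\big)$, where $\sigma_y^2+c_{yz}^2=\mathrm{Var}(y)-2c_{yt}\mathrm{Cov}(t,y)+c_{yt}^2\mathrm{Var}(t)$. In particular $p(y\mid do(t))$ is determined by the covariance matrix of the observed variables.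
   Context: Linear-Gaussian data generating model: $z\sim\mathcal N(0,1)$ is an unobserved confounder; given $z$, the observed variables are independent draws $x_1\mid z\sim\mathcal N(c_1 z,\sigma_1^2)$, $x_2\mid z\sim\mathcal N(c_2 z,\sigma_2^2)$, $t\mid z\sim\mathcal N(c_t z,\sigma_t^2)$, and $y\mid z,t\sim\mathcal N(c_{yz}z+c_{yt}t,\sigma_y^2)$, where $c_\cdot\in\mathbb R$ and $\sigma_\cdot>0$ are fixed parameters. Only $(x_1,x_2,t,y)$ is observed. The interventional distribution is defined by $p(y\mid do(t))=\int p(y\mid z,t)\,p(z)\,dz$. *)

theory Defs
  imports "HOL-Probability.Probability"
begin

text \<open>Joint density of the full (latent + observed) vector (z, x1, x2, t, y) of the
linear-Gaussian model: z ~ N(0,1); given z, x1, x2, t are independent with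
x1 ~ N(c1 z, s1^2), x2 ~ N(c2 z, s2^2), t ~ N(ct z, st^2); y given (z,t) ~ N(cyz z + cyt t, sy^2).
normal_density mu sigma is the N(mu, sigma^2) density.\<close>

definition lg_joint_density ::
  "real \<Rightarrow> real \<Rightarrow> real \<Rightarrow> real \<Rightarrow> real \<Rightarrow> real \<Rightarrow> real \<Rightarrow> real \<Rightarrow> real \<Rightarrow>
   real \<times> real \<times> real \<times> real \<times> real \<Rightarrow> real" where
  "lg_joint_density c1 s1 c2 s2 ct st cyz cyt sy =
     (\<lambda>(z, x1, x2, t, y).
        normal_density 0 1 z * normal_density (c1 * z) s1 x1 * normal_density (c2 * z) s2 x2
        * normal_density (ct * z) st t * normal_density (cyz * z + cyt * t) sy y)"

definition lg_model ::
  "real \<Rightarrow> real \<Rightarrow> real \<Rightarrow> real \<Rightarrow> real \<Rightarrow> real \<Rightarrow> real \<Rightarrow> real \<Rightarrow> real \<Rightarrow>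
   (real \<times> real \<times> real \<times> real \<times> real) measure" where
  "lg_model c1 s1 c2 s2 ct st cyz cyt sy =
     density lborel (\<lambda>w. ennreal (lg_joint_density c1 s1 c2 s2 ct st cyz cyt sy w))"

definition lg_observed ::
  "real \<Rightarrow> real \<Rightarrow> real \<Rightarrow> real \<Rightarrow> real \<Rightarrow> real \<Rightarrow> real \<Rightarrow> real \<Rightarrow> real \<Rightarrow>
   (real \<times> real \<times> real \<times> real) measure" where
  "lg_observed c1 s1 c2 s2 ct st cyz cyt sy =
     distr (lg_model c1 s1 c2 s2 ct st cyz cyt sy) borel (\<lambda>(z, x1, x2, t, y). (x1, x2, t, y))"

definition obs_x1 :: "real \<times> real \<times> real \<times> real \<Rightarrow> real" where "obs_x1 = (\<lambda>(x1, x2, t, y). x1)"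
definition obs_x2 :: "real \<times> real \<times> real \<times> real \<Rightarrow> real" where "obs_x2 = (\<lambda>(x1, x2, t, y). x2)"
definition obs_t  :: "real \<times> real \<times> real \<times> real \<Rightarrow> real" where "obs_t  = (\<lambda>(x1, x2, t, y). t)"
definition obs_y  :: "real \<times> real \<times> real \<times> real \<Rightarrow> real" where "obs_y  = (\<lambda>(x1, x2, t, y). y)"

definition Cov :: "'a measure \<Rightarrow> ('a \<Rightarrow> real) \<Rightarrow> ('a \<Rightarrow> real) \<Rightarrow> real" where
  "Cov M X Y = (\<integral>w. (X w - (\<integral>v. X v \<partial>M)) * (Y w - (\<integral>v. Y v \<partial>M)) \<partial>M)"

definition Var :: "'a measure \<Rightarrow> ('a \<Rightarrow> real) \<Rightarrow> real" where
  "Var M X = Cov M X X"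

definition do_density :: "real \<Rightarrow> real \<Rightarrow> real \<Rightarrow> real \<Rightarrow> real \<Rightarrow> real" where
  "do_density cyz cyt sy t y =
     (\<integral>z. normal_density (cyz * z + cyt * t) sy y * normal_density 0 1 z \<partial>lborel)"

end

theory Submission
  imports Defs
begin

lemma nn1:
  assumes s: "\<sigma> > 0" and K: "K \<ge> 0"
  shows "(\<integral>\<^sup>+u. ennreal (normal_density m \<sigma> u * ((p + q * u)\<^sup>2 + K)) \<partial>lborel)
         = ennreal ((p + q * m)\<^sup>2 + q\<^sup>2 * \<sigma>\<^sup>2 + K)"
proof -
  have h0: "has_bochner_integral lborel (\<lambda>u. normal_density m \<sigma> u * (u - m) ^ (2 * 0)) (fact (2 * 0) / ((2 / \<sigma>\<^sup>2)^0 * fact 0))"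
    by (rule normal_moment_even[OF s])
  have h1: "has_bochner_integral lborel (\<lambda>u. normal_density m \<sigma> u * (u - m) ^ (2 * 0 + 1)) 0"
    by (rule normal_moment_odd[OF s])
  have h2: "has_bochner_integral lborel (\<lambda>u. normal_density m \<sigma> u * (u - m) ^ (2 * 1)) (fact (2 * 1) / ((2 / \<sigma>\<^sup>2)^1 * fact 1))"
    by (rule normal_moment_even[OF s])
  have e2: "fact (2 * 1) / ((2 / \<sigma>\<^sup>2)^1 * fact 1) = \<sigma>\<^sup>2" using s by (simp add: fact_numeral)
  have "has_bochner_integral lborel
     (\<lambda>u. ((p + q * m)\<^sup>2 + K) * (normal_density m \<sigma> u * (u - m) ^ (2 * 0))
        + (2 * (p + q * m) * q) * (normal_density m \<sigma> u * (u - m) ^ (2 * 0 + 1))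
        + q\<^sup>2 * (normal_density m \<sigma> u * (u - m) ^ (2 * 1)))
     (((p + q * m)\<^sup>2 + K) * (fact (2 * 0) / ((2 / \<sigma>\<^sup>2)^0 * fact 0))
        + (2 * (p + q * m) * q) * 0 + q\<^sup>2 * (fact (2 * 1) / ((2 / \<sigma>\<^sup>2)^1 * fact 1)))"
    by (intro has_bochner_integral_add has_bochner_integral_mult_right h0 h1 h2)
  then have hb: "has_bochner_integral lborel (\<lambda>u. normal_density m \<sigma> u * ((p + q * u)\<^sup>2 + K))
      ((p + q * m)\<^sup>2 + q\<^sup>2 * \<sigma>\<^sup>2 + K)"
    unfolding e2
    apply (rule has_bochner_integral_cong[THEN iffD1, rotated 3])
      apply (auto simp: power2_eq_square algebra_simps)
    done
  have hi: "integrable lborel (\<lambda>u. normal_density m \<sigma> u * ((p + q * u)\<^sup>2 + K))"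
    using hb by (rule integrable.intros)
  have he: "integral\<^sup>L lborel (\<lambda>u. normal_density m \<sigma> u * ((p + q * u)\<^sup>2 + K)) = (p + q * m)\<^sup>2 + q\<^sup>2 * \<sigma>\<^sup>2 + K"
    using hb by (rule has_bochner_integral_integral_eq)
  show ?thesis
    apply (subst nn_integral_eq_integral[OF hi])
    using K by (auto simp: he)
qed

lemma step:
  fixes G :: "real \<Rightarrow> 'b::euclidean_space \<Rightarrow> real"
  assumes s: "\<sigma> > 0" and K: "K \<ge> 0"
    and Gm: "(\<lambda>w. G (fst w) (snd w)) \<in> borel_measurable borel"
    and G0: "\<And>u v. 0 \<le> G u v"
    and hyp: "\<And>u. (\<integral>\<^sup>+v. ennreal (G u v) \<partial>lborel) = ennreal ((p + q * u)\<^sup>2 + K)"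
  shows "(\<integral>\<^sup>+w. ennreal (normal_density m \<sigma> (fst w) * G (fst w) (snd w)) \<partial>lborel)
         = ennreal ((p + q * m)\<^sup>2 + q\<^sup>2 * \<sigma>\<^sup>2 + K)"
proof -
  have Gm'[measurable]: "(\<lambda>w. G (fst w) (snd w)) \<in> borel_measurable (lborel \<Otimes>\<^sub>M (lborel :: 'b measure))"
    using Gm by (simp add: lborel_prod)
  have Gx: "G u \<in> borel_measurable lborel" for u
    using measurable_Pair2[OF Gm', of u] by simp
  have meas: "(\<lambda>w. ennreal (normal_density m \<sigma> (fst w) * G (fst w) (snd w))) \<in> borel_measurable (lborel \<Otimes>\<^sub>M (lborel :: 'b measure))"
    by measurable
  have "(\<integral>\<^sup>+w. ennreal (normal_density m \<sigma> (fst w) * G (fst w) (snd w)) \<partial>lborel)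
      = (\<integral>\<^sup>+w. ennreal (normal_density m \<sigma> (fst w) * G (fst w) (snd w)) \<partial>(lborel \<Otimes>\<^sub>M (lborel :: 'b measure)))"
    by (simp add: lborel_prod)
  also have "\<dots> = (\<integral>\<^sup>+u. \<integral>\<^sup>+v. ennreal (normal_density m \<sigma> u * G u v) \<partial>lborel \<partial>lborel)"
    using lborel.nn_integral_fst[OF meas] by simp
  also have "\<dots> = (\<integral>\<^sup>+u. ennreal (normal_density m \<sigma> u) * \<integral>\<^sup>+v. ennreal (G u v) \<partial>lborel \<partial>lborel)"
    apply (rule nn_integral_cong)
    apply (subst nn_integral_cmult[symmetric])
    using Gx apply measurable
    apply (simp add: ennreal_mult G0)
    done
  also have "\<dots> = (\<integral>\<^sup>+u. ennreal (normal_density m \<sigma> u * ((p + q * u)\<^sup>2 + K)) \<partial>lborel)"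
    by (simp add: hyp ennreal_mult K)
  also have "\<dots> = ennreal ((p + q * m)\<^sup>2 + q\<^sup>2 * \<sigma>\<^sup>2 + K)"
    by (rule nn1[OF s K])
  finally show ?thesis .
qed

lemma levT:
  assumes st: "st > 0" and sy: "sy > 0" and K: "K \<ge> 0"
  shows "(\<integral>\<^sup>+w. ennreal (normal_density (ct * z) st (fst w) *
            (normal_density (cyz * z + cyt * fst w) sy (snd w) * ((A + d * fst w + e * snd w)\<^sup>2 + K))) \<partial>lborel)
   = ennreal ((A + e * cyz * z + (d + e * cyt) * (ct * z))\<^sup>2 + (d + e * cyt)\<^sup>2 * st\<^sup>2 + (e\<^sup>2 * sy\<^sup>2 + K))"
proof (rule step[OF st, where G = "\<lambda>t y. normal_density (cyz * z + cyt * t) sy y * ((A + d * t + e * y)\<^sup>2 + K)"])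
  show "0 \<le> e\<^sup>2 * sy\<^sup>2 + K" using K by simp
  show "(\<lambda>w. normal_density (cyz * z + cyt * fst w) sy (snd w) * ((A + d * fst w + e * snd w)\<^sup>2 + K)) \<in> borel_measurable borel"
    by (rule borel_measurable_continuous_onI) (unfold normal_density_def, intro continuous_intros, use sy st in auto)
  show "0 \<le> normal_density (cyz * z + cyt * u) sy v * ((A + d * u + e * v)\<^sup>2 + K)" for u v
    using K by simp
  show "(\<integral>\<^sup>+v. ennreal (normal_density (cyz * z + cyt * u) sy v * ((A + d * u + e * v)\<^sup>2 + K)) \<partial>lborel)
      = ennreal ((A + e * cyz * z + (d + e * cyt) * u)\<^sup>2 + (e\<^sup>2 * sy\<^sup>2 + K))" for u
    using nn1[OF sy K, of "cyz * z + cyt * u" "A + d * u" e]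
    by (simp add: algebra_simps power2_eq_square)
qed

lemma levX2:
  assumes s2: "s2 > 0" and st: "st > 0" and sy: "sy > 0" and K: "K \<ge> 0"
  shows "(\<integral>\<^sup>+w. ennreal (normal_density (c2 * z) s2 (fst w) * (normal_density (ct * z) st (fst (snd w)) *
            (normal_density (cyz * z + cyt * fst (snd w)) sy (snd (snd w)) *
             ((A + c * fst w + d * fst (snd w) + e * snd (snd w))\<^sup>2 + K)))) \<partial>lborel)
   = ennreal ((A + e * cyz * z + (d + e * cyt) * (ct * z) + c * (c2 * z))\<^sup>2 + c\<^sup>2 * s2\<^sup>2
        + ((d + e * cyt)\<^sup>2 * st\<^sup>2 + (e\<^sup>2 * sy\<^sup>2 + K)))"
proof (rule step[OF s2, where G = "\<lambda>x2 v. normal_density (ct * z) st (fst v) *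
            (normal_density (cyz * z + cyt * fst v) sy (snd v) * ((A + c * x2 + d * fst v + e * snd v)\<^sup>2 + K))"])
  show "0 \<le> (d + e * cyt)\<^sup>2 * st\<^sup>2 + (e\<^sup>2 * sy\<^sup>2 + K)" using K by simp
  show "(\<lambda>w. normal_density (ct * z) st (fst (snd w)) *
            (normal_density (cyz * z + cyt * fst (snd w)) sy (snd (snd w)) *
             ((A + c * fst w + d * fst (snd w) + e * snd (snd w))\<^sup>2 + K))) \<in> borel_measurable borel"
    by (rule borel_measurable_continuous_onI) (unfold normal_density_def, intro continuous_intros, use sy st in auto)
  show "0 \<le> normal_density (ct * z) st (fst v) *
            (normal_density (cyz * z + cyt * fst v) sy (snd v) * ((A + c * u + d * fst v + e * snd v)\<^sup>2 + K))" for u v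
    using K by simp
  show "(\<integral>\<^sup>+v. ennreal (normal_density (ct * z) st (fst v) *
            (normal_density (cyz * z + cyt * fst v) sy (snd v) * ((A + c * u + d * fst v + e * snd v)\<^sup>2 + K))) \<partial>lborel)
      = ennreal ((A + e * cyz * z + (d + e * cyt) * (ct * z) + c * u)\<^sup>2 + ((d + e * cyt)\<^sup>2 * st\<^sup>2 + (e\<^sup>2 * sy\<^sup>2 + K)))" for u
    using levT[OF st sy K, of ct z cyz cyt "A + c * u" d e]
    by (simp add: algebra_simps power2_eq_square)
qed

lemma levX1:
  assumes s1: "s1 > 0" and s2: "s2 > 0" and st: "st > 0" and sy: "sy > 0" and K: "K \<ge> 0"
  shows "(\<integral>\<^sup>+w. ennreal (normal_density (c1 * z) s1 (fst w) * (normal_density (c2 * z) s2 (fst (snd w)) *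
            (normal_density (ct * z) st (fst (snd (snd w))) *
            (normal_density (cyz * z + cyt * fst (snd (snd w))) sy (snd (snd (snd w))) *
             ((A + b * fst w + c * fst (snd w) + d * fst (snd (snd w)) + e * snd (snd (snd w)))\<^sup>2 + K))))) \<partial>lborel)
   = ennreal ((A + e * cyz * z + (d + e * cyt) * (ct * z) + c * (c2 * z) + b * (c1 * z))\<^sup>2 + b\<^sup>2 * s1\<^sup>2
        + (c\<^sup>2 * s2\<^sup>2 + ((d + e * cyt)\<^sup>2 * st\<^sup>2 + (e\<^sup>2 * sy\<^sup>2 + K))))"
proof (rule step[OF s1, where G = "\<lambda>x1 v. normal_density (c2 * z) s2 (fst v) * (normal_density (ct * z) st (fst (snd v)) *
            (normal_density (cyz * z + cyt * fst (snd v)) sy (snd (snd v)) *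
             ((A + b * x1 + c * fst v + d * fst (snd v) + e * snd (snd v))\<^sup>2 + K)))"])
  show "0 \<le> c\<^sup>2 * s2\<^sup>2 + ((d + e * cyt)\<^sup>2 * st\<^sup>2 + (e\<^sup>2 * sy\<^sup>2 + K))" using K by simp
  show "(\<lambda>w. normal_density (c2 * z) s2 (fst (snd w)) * (normal_density (ct * z) st (fst (snd (snd w))) *
            (normal_density (cyz * z + cyt * fst (snd (snd w))) sy (snd (snd (snd w))) *
             ((A + b * fst w + c * fst (snd w) + d * fst (snd (snd w)) + e * snd (snd (snd w)))\<^sup>2 + K)))) \<in> borel_measurable borel"
    by (rule borel_measurable_continuous_onI) (unfold normal_density_def, intro continuous_intros, use sy st s2 in auto)
  show "0 \<le> normal_density (c2 * z) s2 (fst v) * (normal_density (ct * z) st (fst (snd v)) *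
            (normal_density (cyz * z + cyt * fst (snd v)) sy (snd (snd v)) *
             ((A + b * u + c * fst v + d * fst (snd v) + e * snd (snd v))\<^sup>2 + K)))" for u v
    using K by simp
  show "(\<integral>\<^sup>+v. ennreal (normal_density (c2 * z) s2 (fst v) * (normal_density (ct * z) st (fst (snd v)) *
            (normal_density (cyz * z + cyt * fst (snd v)) sy (snd (snd v)) *
             ((A + b * u + c * fst v + d * fst (snd v) + e * snd (snd v))\<^sup>2 + K)))) \<partial>lborel)
      = ennreal ((A + e * cyz * z + (d + e * cyt) * (ct * z) + c * (c2 * z) + b * u)\<^sup>2
          + (c\<^sup>2 * s2\<^sup>2 + ((d + e * cyt)\<^sup>2 * st\<^sup>2 + (e\<^sup>2 * sy\<^sup>2 + K))))" for u
    using levX2[OF s2 st sy K, of c2 z ct cyz cyt "A + b * u" c d e]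
    by (simp add: algebra_simps power2_eq_square)
qed

definition lin :: "real \<Rightarrow> real \<Rightarrow> real \<Rightarrow> real \<Rightarrow> real \<Rightarrow> real \<Rightarrow> real \<times> real \<times> real \<times> real \<times> real \<Rightarrow> real" where
  "lin a0 a b c d e = (\<lambda>(z, x1, x2, t, y). a0 + a * z + b * x1 + c * x2 + d * t + e * y)"

lemma E2nn:
  assumes s1: "s1 > 0" and s2: "s2 > 0" and st: "st > 0" and sy: "sy > 0"
  shows "(\<integral>\<^sup>+w. ennreal (lg_joint_density c1 s1 c2 s2 ct st cyz cyt sy w * (lin a0 a b c d e w)\<^sup>2) \<partial>lborel)
    = ennreal (a0\<^sup>2 + (a + e * cyz + (d + e * cyt) * ct + c * c2 + b * c1)\<^sup>2 + b\<^sup>2 * s1\<^sup>2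
        + c\<^sup>2 * s2\<^sup>2 + (d + e * cyt)\<^sup>2 * st\<^sup>2 + e\<^sup>2 * sy\<^sup>2)"
proof -
  let ?G = "\<lambda>z v. normal_density (c1 * z) s1 (fst v) * (normal_density (c2 * z) s2 (fst (snd v)) *
            (normal_density (ct * z) st (fst (snd (snd v))) *
            (normal_density (cyz * z + cyt * fst (snd (snd v))) sy (snd (snd (snd v))) *
             ((a0 + a * z + b * fst v + c * fst (snd v) + d * fst (snd (snd v)) + e * snd (snd (snd v)))\<^sup>2 + 0))))"
  let ?\<alpha> = "a + e * cyz + (d + e * cyt) * ct + c * c2 + b * c1"
  let ?K = "b\<^sup>2 * s1\<^sup>2 + (c\<^sup>2 * s2\<^sup>2 + ((d + e * cyt)\<^sup>2 * st\<^sup>2 + (e\<^sup>2 * sy\<^sup>2 + 0)))"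
  have "(\<integral>\<^sup>+w. ennreal (lg_joint_density c1 s1 c2 s2 ct st cyz cyt sy w * (lin a0 a b c d e w)\<^sup>2) \<partial>lborel)
      = (\<integral>\<^sup>+w. ennreal (normal_density 0 1 (fst w) * ?G (fst w) (snd w)) \<partial>lborel)"
    by (rule nn_integral_cong) (simp add: lg_joint_density_def lin_def split_beta mult_ac)
  also have "\<dots> = ennreal ((a0 + ?\<alpha> * 0)\<^sup>2 + ?\<alpha>\<^sup>2 * 1\<^sup>2 + ?K)"
  proof (rule step[where G = ?G])
    show "(0::real) < 1" by simp
    show "0 \<le> ?K" by simp
    show "(\<lambda>w. ?G (fst w) (snd w)) \<in> borel_measurable borel"
      by (rule borel_measurable_continuous_onI) (unfold normal_density_def, intro continuous_intros, use sy st s2 s1 in auto)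
    show "0 \<le> ?G u v" for u v by simp
    show "(\<integral>\<^sup>+v. ennreal (?G u v) \<partial>lborel) = ennreal ((a0 + ?\<alpha> * u)\<^sup>2 + ?K)" for u
      using levX1[OF s1 s2 st sy order_refl, of c1 u c2 ct cyz cyt "a0 + a * u" b c d e]
      by (simp add: algebra_simps power2_eq_square)
  qed
  also have "\<dots> = ennreal (a0\<^sup>2 + ?\<alpha>\<^sup>2 + b\<^sup>2 * s1\<^sup>2
        + c\<^sup>2 * s2\<^sup>2 + (d + e * cyt)\<^sup>2 * st\<^sup>2 + e\<^sup>2 * sy\<^sup>2)"
    by (simp add: algebra_simps)
  finally show ?thesis .
qed



definition bil :: "real \<Rightarrow> real \<Rightarrow> real \<Rightarrow> real \<Rightarrow> real \<Rightarrow> real \<Rightarrow> real \<Rightarrow> real \<Rightarrow> real \<Rightarrow> real \<Rightarrow> real \<Rightarrow> real \<Rightarrow> real \<Rightarrow> real \<Rightarrow> real \<Rightarrow> real \<Rightarrow> real \<Rightarrow> real \<Rightarrow> real \<Rightarrow> real \<Rightarrow> real \<Rightarrow> real" where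
  "bil c1 s1 c2 s2 ct st cyz cyt sy a0 a b c d e a0' a' b' c' d' e' =
    a0 * a0' + (a + e * cyz + (d + e * cyt) * ct + c * c2 + b * c1) * (a' + e' * cyz + (d' + e' * cyt) * ct + c' * c2 + b' * c1)
    + b * b' * s1\<^sup>2 + c * c' * s2\<^sup>2 + (d + e * cyt) * (d' + e' * cyt) * st\<^sup>2 + e * e' * sy\<^sup>2"

lemma jd_meas:
  assumes "s1 > 0" and "s2 > 0" and "st > 0" and "sy > 0"
  shows "lg_joint_density c1 s1 c2 s2 ct st cyz cyt sy \<in> borel_measurable borel"
  unfolding lg_joint_density_def split_beta
  apply (rule borel_measurable_continuous_onI)
  unfolding normal_density_def
  apply (intro continuous_intros)
  using assms by auto

lemma lin_meas[measurable]: "lin a0 a b c d e \<in> borel_measurable borel"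
  unfolding lin_def split_beta
  by (rule borel_measurable_continuous_onI) (intro continuous_intros)

lemma jd_nonneg: "0 \<le> lg_joint_density c1 s1 c2 s2 ct st cyz cyt sy w"
  by (simp add: lg_joint_density_def split_beta)

lemma E2:
  assumes s1: "s1 > 0" and s2: "s2 > 0" and st: "st > 0" and sy: "sy > 0"
  shows "integrable lborel (\<lambda>w. lg_joint_density c1 s1 c2 s2 ct st cyz cyt sy w * (lin a0 a b c d e w)\<^sup>2)
    \<and> integral\<^sup>L lborel (\<lambda>w. lg_joint_density c1 s1 c2 s2 ct st cyz cyt sy w * (lin a0 a b c d e w)\<^sup>2)
      = bil c1 s1 c2 s2 ct st cyz cyt sy a0 a b c d e a0 a b c d e"
proof -
  note jm[measurable] = jd_meas[OF assms, of c1 c2 ct cyz cyt]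
  have v: "bil c1 s1 c2 s2 ct st cyz cyt sy a0 a b c d e a0 a b c d e
    = a0\<^sup>2 + (a + e * cyz + (d + e * cyt) * ct + c * c2 + b * c1)\<^sup>2 + b\<^sup>2 * s1\<^sup>2
        + c\<^sup>2 * s2\<^sup>2 + (d + e * cyt)\<^sup>2 * st\<^sup>2 + e\<^sup>2 * sy\<^sup>2"
    unfolding bil_def power2_eq_square by (simp only: mult.assoc)
  have nn: "0 \<le> a0\<^sup>2 + (a + e * cyz + (d + e * cyt) * ct + c * c2 + b * c1)\<^sup>2 + b\<^sup>2 * s1\<^sup>2
        + c\<^sup>2 * s2\<^sup>2 + (d + e * cyt)\<^sup>2 * st\<^sup>2 + e\<^sup>2 * sy\<^sup>2"
    by (intro add_nonneg_nonneg mult_nonneg_nonneg zero_le_power2)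
  show ?thesis
    unfolding v
    apply (rule nn_integral_eq_integrable[THEN iffD1])
       apply measurable
      apply (simp add: jd_nonneg)
     apply (rule nn)
    apply (rule E2nn[OF assms])
    done
qed

lemma lin_add: "lin a0 a b c d e w + lin a0' a' b' c' d' e' w = lin (a0 + a0') (a + a') (b + b') (c + c') (d + d') (e + e') w"
  by (simp add: lin_def split_beta algebra_simps)
lemma lin_diff: "lin a0 a b c d e w - lin a0' a' b' c' d' e' w = lin (a0 - a0') (a - a') (b - b') (c - c') (d - d') (e - e') w"
  by (simp add: lin_def split_beta algebra_simps)

lemma polar: "(J::real) * (X * Y) = (J * (X + Y)\<^sup>2 - J * (X - Y)\<^sup>2) / 4"
  by (simp add: power2_eq_square algebra_simps)

lemma bil_polar: "(bil c1 s1 c2 s2 ct st cyz cyt sy (a0 + a0') (a + a') (b + b') (c + c') (d + d') (e + e') (a0 + a0') (a + a') (b + b') (c + c') (d + d') (e + e')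
   - bil c1 s1 c2 s2 ct st cyz cyt sy (a0 - a0') (a - a') (b - b') (c - c') (d - d') (e - e') (a0 - a0') (a - a') (b - b') (c - c') (d - d') (e - e')) / 4
   = bil c1 s1 c2 s2 ct st cyz cyt sy a0 a b c d e a0' a' b' c' d' e'"
proof -
  define f where "f a b c d e = a + e * cyz + (d + e * cyt) * ct + c * c2 + b * c1" for a b c d e
  have fa: "f (a + a') (b + b') (c + c') (d + d') (e + e') = f a b c d e + f a' b' c' d' e'"
    unfolding f_def by (simp add: algebra_simps)
  have fd: "f (a - a') (b - b') (c - c') (d - d') (e - e') = f a b c d e - f a' b' c' d' e'"
    unfolding f_def by (simp add: algebra_simps)
  have b2: "bil c1 s1 c2 s2 ct st cyz cyt sy a0 a b c d e a0' a' b' c' d' e' =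
     a0 * a0' + f a b c d e * f a' b' c' d' e' + b * b' * s1\<^sup>2 + c * c' * s2\<^sup>2 + (d + e * cyt) * (d' + e' * cyt) * st\<^sup>2 + e * e' * sy\<^sup>2"
    for a0 a b c d e a0' a' b' c' d' e' unfolding bil_def f_def ..
  show ?thesis unfolding b2 fa fd
    by (simp add: algebra_simps)
qed

lemma Ebil:
  assumes s1: "s1 > 0" and s2: "s2 > 0" and st: "st > 0" and sy: "sy > 0"
  shows "integral\<^sup>L lborel (\<lambda>w. lg_joint_density c1 s1 c2 s2 ct st cyz cyt sy w * (lin a0 a b c d e w * lin a0' a' b' c' d' e' w))
      = bil c1 s1 c2 s2 ct st cyz cyt sy a0 a b c d e a0' a' b' c' d' e'"
proof -
  let ?J = "lg_joint_density c1 s1 c2 s2 ct st cyz cyt sy"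
  let ?P = "lin (a0 + a0') (a + a') (b + b') (c + c') (d + d') (e + e')"
  let ?M = "lin (a0 - a0') (a - a') (b - b') (c - c') (d - d') (e - e')"
  note p = E2[OF assms, of c1 c2 ct cyz cyt "a0 + a0'" "a + a'" "b + b'" "c + c'" "d + d'" "e + e'"]
  note m = E2[OF assms, of c1 c2 ct cyz cyt "a0 - a0'" "a - a'" "b - b'" "c - c'" "d - d'" "e - e'"]
  have eq: "?J w * (lin a0 a b c d e w * lin a0' a' b' c' d' e' w) = (?J w * (?P w)\<^sup>2 - ?J w * (?M w)\<^sup>2) / 4" for w
    unfolding lin_add[symmetric] lin_diff[symmetric] by (rule polar)
  have "integral\<^sup>L lborel (\<lambda>w. ?J w * (lin a0 a b c d e w * lin a0' a' b' c' d' e' w))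
      = integral\<^sup>L lborel (\<lambda>w. (?J w * (?P w)\<^sup>2 - ?J w * (?M w)\<^sup>2) / 4)"
    by (simp only: eq)
  also have "\<dots> = (integral\<^sup>L lborel (\<lambda>w. ?J w * (?P w)\<^sup>2) - integral\<^sup>L lborel (\<lambda>w. ?J w * (?M w)\<^sup>2)) / 4"
    apply (subst integral_divide_zero)
    apply (rule arg_cong[where f="\<lambda>x. x / 4"])
    apply (rule Bochner_Integration.integral_diff)
     apply (rule conjunct1[OF p])
    apply (rule conjunct1[OF m])
    done
  also have "\<dots> = bil c1 s1 c2 s2 ct st cyz cyt sy a0 a b c d e a0' a' b' c' d' e'"
    unfolding conjunct2[OF p] conjunct2[OF m] by (rule bil_polar)
  finally show ?thesis .
qed

definition proj :: "real \<times> real \<times> real \<times> real \<times> real \<Rightarrow> real \<times> real \<times> real \<times> real" where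
  "proj = (\<lambda>(z, x1, x2, t, y). (x1, x2, t, y))"

lemma intP:
  assumes s1: "s1 > 0" and s2: "s2 > 0" and st: "st > 0" and sy: "sy > 0"
  assumes g: "continuous_on UNIV g"
  shows "integral\<^sup>L (lg_observed c1 s1 c2 s2 ct st cyz cyt sy) g
     = integral\<^sup>L lborel (\<lambda>w. lg_joint_density c1 s1 c2 s2 ct st cyz cyt sy w * g (proj w))"
proof -
  note jm[measurable] = jd_meas[OF s1 s2 st sy, of c1 c2 ct cyz cyt]
  have gm[measurable]: "g \<in> borel_measurable borel" using g by (rule borel_measurable_continuous_onI)
  have pm[measurable]: "proj \<in> borel_measurable borel"
    unfolding proj_def split_beta by (rule borel_measurable_continuous_onI) (intro continuous_intros)
  have pm': "proj \<in> measurable (lg_model c1 s1 c2 s2 ct st cyz cyt sy) borel"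
    unfolding lg_model_def by (simp add: measurable_cong_sets[OF sets_density refl])
  have "integral\<^sup>L (lg_observed c1 s1 c2 s2 ct st cyz cyt sy) g
      = integral\<^sup>L (lg_model c1 s1 c2 s2 ct st cyz cyt sy) (\<lambda>w. g (proj w))"
    unfolding lg_observed_def proj_def[symmetric]
    by (rule integral_distr[OF pm' gm])
  also have "\<dots> = integral\<^sup>L lborel (\<lambda>w. lg_joint_density c1 s1 c2 s2 ct st cyz cyt sy w * g (proj w))"
    unfolding lg_model_def
    by (subst integral_density) (auto simp: jd_nonneg)
  finally show ?thesis .
qed

lemma cov_lin:
  assumes s1: "s1 > 0" and s2: "s2 > 0" and st: "st > 0" and sy: "sy > 0"
    and X: "\<And>w. X (proj w) = lin 0 a b c d e w" and Y: "\<And>w. Y (proj w) = lin 0 a' b' c' d' e' w"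
    and cX: "continuous_on UNIV X" and cY: "continuous_on UNIV Y"
  shows "Cov (lg_observed c1 s1 c2 s2 ct st cyz cyt sy) X Y = bil c1 s1 c2 s2 ct st cyz cyt sy 0 a b c d e 0 a' b' c' d' e'"
proof -
  let ?P = "lg_observed c1 s1 c2 s2 ct st cyz cyt sy"
  let ?J = "lg_joint_density c1 s1 c2 s2 ct st cyz cyt sy"
  have one: "lin 1 0 0 0 0 0 w = 1" for w by (simp add: lin_def split_beta)
  have mX: "integral\<^sup>L ?P X = 0"
  proof -
    have "integral\<^sup>L ?P X = integral\<^sup>L lborel (\<lambda>w. ?J w * (lin 0 a b c d e w * lin 1 0 0 0 0 0 w))"
      by (simp add: intP[OF s1 s2 st sy cX] X one)
    also have "\<dots> = 0" by (simp add: Ebil[OF s1 s2 st sy] bil_def)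
    finally show ?thesis .
  qed
  have mY: "integral\<^sup>L ?P Y = 0"
  proof -
    have "integral\<^sup>L ?P Y = integral\<^sup>L lborel (\<lambda>w. ?J w * (lin 0 a' b' c' d' e' w * lin 1 0 0 0 0 0 w))"
      by (simp add: intP[OF s1 s2 st sy cY] Y one)
    also have "\<dots> = 0" by (simp add: Ebil[OF s1 s2 st sy] bil_def)
    finally show ?thesis .
  qed
  have "Cov ?P X Y = integral\<^sup>L ?P (\<lambda>v. X v * Y v)"
    unfolding Cov_def mX mY by simp
  also have "\<dots> = integral\<^sup>L lborel (\<lambda>w. ?J w * (lin 0 a b c d e w * lin 0 a' b' c' d' e' w))"
    by (subst intP[OF s1 s2 st sy]) (auto intro: continuous_on_mult cX cY simp: X Y)
  also have "\<dots> = bil c1 s1 c2 s2 ct st cyz cyt sy 0 a b c d e 0 a' b' c' d' e'"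
    by (rule Ebil[OF s1 s2 st sy])
  finally show ?thesis .
qed

lemma nd_shift: "normal_density m s x = normal_density 0 s (x - m)"
  by (simp add: normal_density_def)

lemma nd_abs: "normal_density m \<bar>s\<bar> x = normal_density m s x"
  by (simp add: normal_density_def)

lemma nd_scale: "c \<noteq> 0 \<Longrightarrow> normal_density 0 1 z = \<bar>c\<bar> * normal_density 0 \<bar>c\<bar> (c * z)"
  unfolding normal_density_def
  by (simp add: real_sqrt_mult power_mult_distrib field_simps)

lemma do_density_eq:
  assumes sy: "sy > 0"
  shows "do_density cyz cyt sy t y = normal_density (cyt * t) (sqrt (sy\<^sup>2 + cyz\<^sup>2)) y"
proof (cases "cyz = 0")
  case True
  then show ?thesis unfolding do_density_def using sy by simp
next
  case False
  define c where "c = cyz"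
  define Y where "Y = y - cyt * t"
  have c: "c \<noteq> 0" using False c_def by simp
  have ac: "0 < \<bar>c\<bar>" using c by simp
  define f where "f u = ennreal (normal_density 0 sy (Y - u) * normal_density 0 \<bar>c\<bar> u)" for u
  have fm[measurable]: "f \<in> borel_measurable borel" unfolding f_def by measurable
  have "(\<integral>\<^sup>+z. ennreal (normal_density (cyz * z + cyt * t) sy y * normal_density 0 1 z) \<partial>lborel)
      = (\<integral>\<^sup>+z. ennreal \<bar>c\<bar> * f (0 + c * z) \<partial>lborel)"
    apply (rule nn_integral_cong)
    apply (subst nd_scale[OF c])
    apply (simp add: f_def nd_shift[of "cyz * _ + cyt * t"] Y_def c_def ennreal_mult'[symmetric] algebra_simps)
    apply (metis nd_shift)
    done
  also have "\<dots> = ennreal \<bar>c\<bar> * (\<integral>\<^sup>+z. f (0 + c * z) \<partial>lborel)"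
    by (rule nn_integral_cmult) measurable
  also have "\<dots> = (\<integral>\<^sup>+u. f u \<partial>lborel)"
    using nn_integral_real_affine[OF fm c, of 0] by simp
  also have "\<dots> = ennreal (normal_density 0 (sqrt (sy\<^sup>2 + \<bar>c\<bar>\<^sup>2)) Y)"
    unfolding f_def using conv_normal_density_zero_mean[OF sy ac] by (simp add: fun_eq_iff)
  finally have nn: "(\<integral>\<^sup>+z. ennreal (normal_density (cyz * z + cyt * t) sy y * normal_density 0 1 z) \<partial>lborel)
      = ennreal (normal_density (cyt * t) (sqrt (sy\<^sup>2 + cyz\<^sup>2)) y)"
    by (simp add: Y_def c_def nd_shift[of "cyt * t"])
  have "(\<integral>z. normal_density (cyz * z + cyt * t) sy y * normal_density 0 1 z \<partial>lborel)
      = normal_density (cyt * t) (sqrt (sy\<^sup>2 + cyz\<^sup>2)) y"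
  proof -
    have meas: "(\<lambda>z. normal_density (cyz * z + cyt * t) sy y * normal_density 0 1 z) \<in> borel_measurable lborel"
      unfolding normal_density_def by measurable
    show ?thesis using nn_integral_eq_integrable[THEN iffD1, OF meas _ _ nn] by simp
  qed
  then show ?thesis unfolding do_density_def .
qed

theorem mainTheorem4:
  fixes c1 c2 ct cyz cyt s1 s2 st sy :: real
  defines "P \<equiv> lg_observed c1 s1 c2 s2 ct st cyz cyt sy"
  assumes "c1 \<noteq> 0" and "c2 \<noteq> 0"
    and "s1 > 0" and "s2 > 0" and "st > 0" and "sy > 0"
  shows "Var P obs_t * Cov P obs_x1 obs_x2 - Cov P obs_x1 obs_t * Cov P obs_x2 obs_t \<noteq> 0
    \<and> cyt = (Cov P obs_t obs_y * Cov P obs_x1 obs_x2 - Cov P obs_x2 obs_y * Cov P obs_x1 obs_t)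
               / (Var P obs_t * Cov P obs_x1 obs_x2 - Cov P obs_x1 obs_t * Cov P obs_x2 obs_t)
    \<and> (\<forall>t y. do_density cyz cyt sy t y = normal_density (cyt * t) (sqrt (sy\<^sup>2 + cyz\<^sup>2)) y)
    \<and> sy\<^sup>2 + cyz\<^sup>2 = Var P obs_y - 2 * cyt * Cov P obs_t obs_y + cyt\<^sup>2 * Var P obs_t"
proof -
  note pos = assms(4-7)
  have p1: "obs_x1 (proj w) = lin 0 0 1 0 0 0 w" for w by (simp add: obs_x1_def proj_def lin_def split_beta)
  have p2: "obs_x2 (proj w) = lin 0 0 0 1 0 0 w" for w by (simp add: obs_x2_def proj_def lin_def split_beta)
  have pt: "obs_t (proj w) = lin 0 0 0 0 1 0 w" for w by (simp add: obs_t_def proj_def lin_def split_beta)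
  have py: "obs_y (proj w) = lin 0 0 0 0 0 1 w" for w by (simp add: obs_y_def proj_def lin_def split_beta)
  have k1: "continuous_on UNIV obs_x1" unfolding obs_x1_def split_beta by (intro continuous_intros)
  have k2: "continuous_on UNIV obs_x2" unfolding obs_x2_def split_beta by (intro continuous_intros)
  have kt: "continuous_on UNIV obs_t" unfolding obs_t_def split_beta by (intro continuous_intros)
  have ky: "continuous_on UNIV obs_y" unfolding obs_y_def split_beta by (intro continuous_intros)
  have Vt: "Var P obs_t = ct\<^sup>2 + st\<^sup>2"
    unfolding P_def Var_def using cov_lin[OF pos pt pt kt kt] by (simp add: bil_def power2_eq_square)
  have C12: "Cov P obs_x1 obs_x2 = c1 * c2"
    unfolding P_def using cov_lin[OF pos p1 p2 k1 k2] by (simp add: bil_def)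
  have C1t: "Cov P obs_x1 obs_t = c1 * ct"
    unfolding P_def using cov_lin[OF pos p1 pt k1 kt] by (simp add: bil_def)
  have C2t: "Cov P obs_x2 obs_t = c2 * ct"
    unfolding P_def using cov_lin[OF pos p2 pt k2 kt] by (simp add: bil_def)
  have Cty: "Cov P obs_t obs_y = ct * (cyz + cyt * ct) + cyt * st\<^sup>2"
    unfolding P_def using cov_lin[OF pos pt py kt ky] by (simp add: bil_def algebra_simps)
  have C2y: "Cov P obs_x2 obs_y = c2 * (cyz + cyt * ct)"
    unfolding P_def using cov_lin[OF pos p2 py k2 ky] by (simp add: bil_def algebra_simps)
  have Vy: "Var P obs_y = (cyz + cyt * ct)\<^sup>2 + cyt\<^sup>2 * st\<^sup>2 + sy\<^sup>2"
    unfolding P_def Var_def using cov_lin[OF pos py py ky ky] by (simp add: bil_def power2_eq_square algebra_simps)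
  have D: "Var P obs_t * Cov P obs_x1 obs_x2 - Cov P obs_x1 obs_t * Cov P obs_x2 obs_t = c1 * c2 * st\<^sup>2"
    unfolding Vt C12 C1t C2t by (simp add: algebra_simps power2_eq_square)
  have Dnz: "c1 * c2 * st\<^sup>2 \<noteq> 0" using assms(2,3,6) by simp
  have N: "Cov P obs_t obs_y * Cov P obs_x1 obs_x2 - Cov P obs_x2 obs_y * Cov P obs_x1 obs_t = cyt * (c1 * c2 * st\<^sup>2)"
    unfolding Cty C12 C2y C1t by (simp add: algebra_simps power2_eq_square)
  show ?thesis
  proof (intro conjI allI)
    show "Var P obs_t * Cov P obs_x1 obs_x2 - Cov P obs_x1 obs_t * Cov P obs_x2 obs_t \<noteq> 0"
      using D Dnz by simp
    show "cyt = (Cov P obs_t obs_y * Cov P obs_x1 obs_x2 - Cov P obs_x2 obs_y * Cov P obs_x1 obs_t)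
               / (Var P obs_t * Cov P obs_x1 obs_x2 - Cov P obs_x1 obs_t * Cov P obs_x2 obs_t)"
      unfolding D N using Dnz by simp
    show "do_density cyz cyt sy t y = normal_density (cyt * t) (sqrt (sy\<^sup>2 + cyz\<^sup>2)) y" for t y
      by (rule do_density_eq[OF assms(7)])
    show "sy\<^sup>2 + cyz\<^sup>2 = Var P obs_y - 2 * cyt * Cov P obs_t obs_y + cyt\<^sup>2 * Var P obs_t"
      unfolding Vy Cty Vt by (simp add: algebra_simps power2_eq_square)
  qed
qed

end
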